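(* Let $(a_n)_{\mathrm c}\in\widetilde{\mathbb C}_{\mathrm c}$ and $c\in\widetilde{\mathbb C}$. (i) If $z\in S((a_n)_{\mathrm c},c)$ (i.e. $\sum_{n\in\widetilde{\mathbb N}}a_n(z-c)^n$ is a convergent hyperpower series), then there exists $K\in\widetilde{\mathbb N}$ such that $|a_n(z-c)^n|<K$ for all $n\in\widetilde{\mathbb N}$, where $a_n(z-c)^n$ denotes the $n$-th term of the formal hyperpower series $(a_n(z-c)^n)_n\in\widetilde{\mathbb C}_{\mathrm s}$. (ii) For all representatives $(a_n)_{\mathrm c}=[a_{n\varepsilon}]_{\mathrm c}$ and $c=[c_\varepsilon]$ there exists $\delta\in\widetilde{\mathbb R}_{>0}$ such that for every $z=[z_\varepsilon]\in B_\delta(c)$ there is $K=[K_\varepsilon]\in\widetilde{\mathbb R}_{>0}$ with: for all sufficiently small $\varepsilon$ and all $n\in\mathbb N$, $|a_{n\varepsilon}(z_\varepsilon-c_\varepsilon)^n|<K_\varepsilon$.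
   Context: Fix $I=(0,1]$ and a gauge $\rho=(\rho_\varepsilon)_{\varepsilon\in I}$ with $\rho_\varepsilon\in I$ and $\rho_\varepsilon\to0$ as $\varepsilon\to0$. "$\forall^0\varepsilon$" means "for all sufficiently small $\varepsilon\in I$". A net $(x_\varepsilon)\in\mathbb C^I$ is $\rho$-moderate ($(x_\varepsilon)\in\mathbb C_\rho$) if $\exists N\in\mathbb N\,\forall^0\varepsilon:|x_\varepsilon|\le\rho_\varepsilon^{-N}$, and $\rho$-negligible if $\forall q\in\mathbb N\,\forall^0\varepsilon:|x_\varepsilon|\le\rho_\varepsilon^q$. $\widetilde{\mathbb C}:=\mathbb C_\rho/\{\text{negligible nets}\}$ with classes $[x_\varepsilon]$; $\widetilde{\mathbb R}\subseteq\widetilde{\mathbb C}$ consists of classes of real moderate nets; $\mathrm d\rho:=[\rho_\varepsilon]$, $|[z_\varepsilon]|:=[|z_\varepsilon|]$. On $\widetilde{\mathbb R}$: $[x_\varepsilon]\le[y_\varepsilon]$ iff $x_\varepsilon\le y_\varepsilon+z_\varepsilon$ $\forall^0\varepsilon$ for some negligible $(z_\varepsilon)$; $x<y$ iff $\exists m\,\forall^0\varepsilon:y_\varepsilon-x_\varepsilon>\rho_\varepsilon^m$; $\widetilde{\mathbb R}_{>0}:=\{x:x>0\}$. $B_r(c):=\{z\in\widetilde{\mathbb C}:|z-c|<r\}$ for $r\in\widetilde{\mathbb R}_{>0}$. Hypernatural numbers: $\widetilde{\mathbb N}:=\{[n_\varepsilon]\in\widetilde{\mathbb R}:n_\varepsilon\in\mathbb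 N\ \forall\varepsilon\}$; for each $N\in\widetilde{\mathbb N}$ a representative $(\mathrm{ni}(N)_\varepsilon)$ with all $\mathrm{ni}(N)_\varepsilon\in\mathbb N$ is fixed. Hyperlimit: $l=\lim_{n\in\widetilde{\mathbb N}}a_n$ means $\forall q\,\exists M\in\widetilde{\mathbb N}\,\forall n\in\widetilde{\mathbb N}:n\ge M\Rightarrow|a_n-l|<\mathrm d\rho^q$. Hyperseries: a net $(a_{n\varepsilon})_{n\in\mathbb N,\varepsilon\in I}$ is moderate over hypersums if for every $N\in\widetilde{\mathbb N}$ the net $(\sum_{n=0}^{\mathrm{ni}(N)_\varepsilon}a_{n\varepsilon})_\varepsilon$ is $\rho$-moderate; two such nets are equivalent if for all $N,M\in\widetilde{\mathbb N}$ the net $(\sum_{n=\mathrm{ni}(N)_\varepsilon}^{\mathrm{ni}(M)_\varepsilon}(a_{n\varepsilon}-\bar a_{n\varepsilon}))_\varepsilon$ is negligible; the quotient is $\widetilde{\mathbb C}_{\mathrm s}$ with classes $(b_n)_n=[b_{n\varepsilon}]_{\mathrm s}$, and $b_N:=[b_{\mathrm{ni}(N)_\varepsilon,\varepsilon}]$ for $N\in\widetilde{\mathbb N}$ (well defined). $\sum_{n=N}^Mb_n:=[\sum_{n=\mathrm{ni}(N)_\varepsilon}^{\mathrm{ni}(M)_\varepsilon}b_{n\varepsilon}]$, and $\sum_{n\in\widetilde{\mathbb N}}b_n:=\lim_{N\in\widetilde{\mathbb N}}\sum_{n=0}^Nb_n$ when this hyperlimit exists. Coefficients: $\widetilde{\mathbb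 C}_{\mathrm c}$ is the set of weakly $\rho$-moderate nets $(a_{n\varepsilon})$ ($\exists Q,R\in\mathbb N\,\forall^0\varepsilon\,\forall n\in\mathbb N:|a_{n\varepsilon}|\le\rho_\varepsilon^{-nQ-R}$) modulo strong equivalence ($\forall q,r\,\forall^0\varepsilon\,\forall n:|a_{n\varepsilon}-\bar a_{n\varepsilon}|\le\rho_\varepsilon^{nq+r}$), classes $(a_n)_{\mathrm c}=[a_{n\varepsilon}]_{\mathrm c}$. $\widetilde{\mathbb R}_\infty:=(\mathbb R\cup\{\pm\infty\})^I/\sim_\rho$, and for $x\in\widetilde{\mathbb R}$, $y\in\widetilde{\mathbb R}_\infty$, $x<y$ iff $\exists m\,\forall^0\varepsilon:y_\varepsilon>x_\varepsilon+\rho_\varepsilon^m$. Radius: $\mathrm{rad}(a_n)_{\mathrm c}:=[(\limsup_n|a_{n\varepsilon}|^{1/n})^{-1}]\in\widetilde{\mathbb R}_\infty$. Set of convergence: $S((a_n)_{\mathrm c},c)$ is the set of $z\in\widetilde{\mathbb C}$ with $|z-c|<\mathrm{rad}(a_n)_{\mathrm c}$ for which there exist representatives $z=[z_\varepsilon]$, $c=[c_\varepsilon]$, $(a_n)_{\mathrm c}=[a_{n\varepsilon}]_{\mathrm c}$ such that: (a) the net $(a_{n\varepsilon}(z_\varepsilon-c_\varepsilon)^n)_{n,\varepsilon}$ is moderate over hypersums (its class $(a_n(z-c)^n)_n\in\widetilde{\mathbb C}_{\mathrm s}$ is the formal hyperpower series, independent of representatives); (b) the hyperseries $\sum_{n\in\widetilde{\mathbb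 N}}a_n(z-c)^n$ converges and equals $[\sum_{n=0}^{\infty}a_{n\varepsilon}(z_\varepsilon-c_\varepsilon)^n]$; (c) for every representative $z=[\hat z_\varepsilon]$, the net $(\sum_{n\ge1}na_{n\varepsilon}(\hat z_\varepsilon-c_\varepsilon)^{n-1})_\varepsilon$ is $\rho$-moderate. *)

theory Defs
  imports Complex_Main "HOL-Library.Extended_Real" "HOL-Library.Liminf_Limsup"
begin

text \<open>Generalized numbers are handled through their representatives (nets indexed by
  \<open>\<epsilon> \<in> (0,1]\<close>, encoded as functions on real); equality of classes is the
  explicit equivalence \<open>Ceq\<close>. "For all sufficiently small \<epsilon>" is
  \<open>eventually _ (at_right 0)\<close>.\<close>

definition rho_gauge :: "(real \<Rightarrow> real) \<Rightarrow> bool" where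
  "rho_gauge \<rho> \<longleftrightarrow> (\<forall>\<epsilon>\<in>{0<..1}. \<rho> \<epsilon> \<in> {0<..1}) \<and> (\<rho> \<longlongrightarrow> 0) (at_right 0)"

definition moderate :: "(real \<Rightarrow> real) \<Rightarrow> (real \<Rightarrow> 'a::real_normed_vector) \<Rightarrow> bool" where
  "moderate \<rho> x \<longleftrightarrow> (\<exists>N::nat. eventually (\<lambda>\<epsilon>. norm (x \<epsilon>) \<le> inverse (\<rho> \<epsilon>) ^ N) (at_right 0))"

definition negligible :: "(real \<Rightarrow> real) \<Rightarrow> (real \<Rightarrow> 'a::real_normed_vector) \<Rightarrow> bool" where
  "negligible \<rho> x \<longleftrightarrow> (\<forall>q::nat. eventually (\<lambda>\<epsilon>. norm (x \<epsilon>) \<le> \<rho> \<epsilon> ^ q) (at_right 0))"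

definition Ceq :: "(real \<Rightarrow> real) \<Rightarrow> (real \<Rightarrow> 'a::real_normed_vector) \<Rightarrow> (real \<Rightarrow> 'a) \<Rightarrow> bool" where
  "Ceq \<rho> x y \<longleftrightarrow> negligible \<rho> (\<lambda>\<epsilon>. x \<epsilon> - y \<epsilon>)"

definition gle :: "(real \<Rightarrow> real) \<Rightarrow> (real \<Rightarrow> real) \<Rightarrow> (real \<Rightarrow> real) \<Rightarrow> bool" where
  "gle \<rho> x y \<longleftrightarrow> (\<exists>z. negligible \<rho> z \<and> eventually (\<lambda>\<epsilon>. x \<epsilon> \<le> y \<epsilon> + z \<epsilon>) (at_right 0))"

definition glt :: "(real \<Rightarrow> real) \<Rightarrow> (real \<Rightarrow> real) \<Rightarrow> (real \<Rightarrow> real) \<Rightarrow> bool" where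
  "glt \<rho> x y \<longleftrightarrow> (\<exists>m::nat. eventually (\<lambda>\<epsilon>. y \<epsilon> - x \<epsilon> > \<rho> \<epsilon> ^ m) (at_right 0))"

definition glt_inf :: "(real \<Rightarrow> real) \<Rightarrow> (real \<Rightarrow> real) \<Rightarrow> (real \<Rightarrow> ereal) \<Rightarrow> bool" where
  "glt_inf \<rho> x y \<longleftrightarrow> (\<exists>m::nat. eventually (\<lambda>\<epsilon>. y \<epsilon> > ereal (x \<epsilon> + \<rho> \<epsilon> ^ m)) (at_right 0))"

definition hypnat :: "(real \<Rightarrow> real) \<Rightarrow> (real \<Rightarrow> nat) \<Rightarrow> bool" where
  "hypnat \<rho> n \<longleftrightarrow> moderate \<rho> (\<lambda>\<epsilon>. real (n \<epsilon>))"

definition hyperlim :: "(real \<Rightarrow> real) \<Rightarrow> ((real \<Rightarrow> nat) \<Rightarrow> real \<Rightarrow> complex) \<Rightarrow> (real \<Rightarrow> complex) \<Rightarrow> bool" where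
  "hyperlim \<rho> A l \<longleftrightarrow>
     (\<forall>q::nat. \<exists>M. hypnat \<rho> M \<and>
        (\<forall>n. hypnat \<rho> n \<and> gle \<rho> (\<lambda>\<epsilon>. real (M \<epsilon>)) (\<lambda>\<epsilon>. real (n \<epsilon>)) \<longrightarrow>
             glt \<rho> (\<lambda>\<epsilon>. norm (A n \<epsilon> - l \<epsilon>)) (\<lambda>\<epsilon>. \<rho> \<epsilon> ^ q)))"

definition hypsum_moderate :: "(real \<Rightarrow> real) \<Rightarrow> (nat \<Rightarrow> real \<Rightarrow> complex) \<Rightarrow> bool" where
  "hypsum_moderate \<rho> b \<longleftrightarrow> (\<forall>N. hypnat \<rho> N \<longrightarrow> moderate \<rho> (\<lambda>\<epsilon>. \<Sum>n\<le>N \<epsilon>. b n \<epsilon>))"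

definition coeff_wmod :: "(real \<Rightarrow> real) \<Rightarrow> (nat \<Rightarrow> real \<Rightarrow> complex) \<Rightarrow> bool" where
  "coeff_wmod \<rho> a \<longleftrightarrow> (\<exists>Q R::nat. eventually (\<lambda>\<epsilon>. \<forall>n. norm (a n \<epsilon>) \<le> inverse (\<rho> \<epsilon>) ^ (n * Q + R)) (at_right 0))"

definition coeff_eq :: "(real \<Rightarrow> real) \<Rightarrow> (nat \<Rightarrow> real \<Rightarrow> complex) \<Rightarrow> (nat \<Rightarrow> real \<Rightarrow> complex) \<Rightarrow> bool" where
  "coeff_eq \<rho> a a' \<longleftrightarrow> (\<forall>q r::nat. eventually (\<lambda>\<epsilon>. \<forall>n. norm (a n \<epsilon> - a' n \<epsilon>) \<le> \<rho> \<epsilon> ^ (n * q + r)) (at_right 0))"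

text \<open>Radius of convergence (a representative in \<open>\<widetilde>\<real>\<^sub>\<infinity>\<close>);
  in ereal, \<open>inverse 0 = \<infinity>\<close> and \<open>inverse \<infinity> = 0\<close>.\<close>
definition rad :: "(nat \<Rightarrow> real \<Rightarrow> complex) \<Rightarrow> real \<Rightarrow> ereal" where
  "rad a \<epsilon> = inverse (limsup (\<lambda>n. ereal (root n (norm (a n \<epsilon>)))))"

definition conv_set :: "(real \<Rightarrow> real) \<Rightarrow> (nat \<Rightarrow> real \<Rightarrow> complex) \<Rightarrow> (real \<Rightarrow> complex) \<Rightarrow> (real \<Rightarrow> complex) \<Rightarrow> bool" where
  "conv_set \<rho> a c z \<longleftrightarrow>
     moderate \<rho> z \<and>
     glt_inf \<rho> (\<lambda>\<epsilon>. norm (z \<epsilon> - c \<epsilon>)) (rad a) \<and>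
     (\<exists>z' c' a'. Ceq \<rho> z z' \<and> Ceq \<rho> c c' \<and> coeff_wmod \<rho> a' \<and> coeff_eq \<rho> a a' \<and>
        hypsum_moderate \<rho> (\<lambda>n \<epsilon>. a' n \<epsilon> * (z' \<epsilon> - c' \<epsilon>) ^ n) \<and>
        hyperlim \<rho> (\<lambda>N \<epsilon>. \<Sum>n\<le>N \<epsilon>. a' n \<epsilon> * (z' \<epsilon> - c' \<epsilon>) ^ n)
                   (\<lambda>\<epsilon>. \<Sum>n. a' n \<epsilon> * (z' \<epsilon> - c' \<epsilon>) ^ n) \<and>
        (\<forall>zh. Ceq \<rho> z zh \<longrightarrow>
           moderate \<rho> (\<lambda>\<epsilon>. \<Sum>n. of_nat (Suc n) * a' (Suc n) \<epsilon> * (zh \<epsilon> - c' \<epsilon>) ^ n)))"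

end

theory Submission
  imports Defs
begin

lemma ev_rho:
  assumes "rho_gauge \<rho>" "e > 0"
  shows "eventually (\<lambda>\<epsilon>. 0 < \<rho> \<epsilon> \<and> \<rho> \<epsilon> \<le> 1 \<and> \<rho> \<epsilon> < e) (at_right 0)"
proof -
  have 3: "\<forall>\<epsilon>\<in>{0<..1}. \<rho> \<epsilon> \<in> {0<..1}" using assms(1) unfolding rho_gauge_def by auto
  have "eventually (\<lambda>\<epsilon>. \<epsilon> \<in> {0<..<1::real}) (at_right 0)"
    by (rule eventually_at_right_real) simp
  moreover have "eventually (\<lambda>\<epsilon>. \<rho> \<epsilon> < e) (at_right 0)"
    using assms unfolding rho_gauge_def by (auto dest: order_tendstoD(2))
  ultimately show ?thesis by eventually_elim (use 3 in auto)
qed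

lemma mod_mono:
  assumes "moderate \<rho> g" "eventually (\<lambda>\<epsilon>. norm (f \<epsilon>) \<le> norm (g \<epsilon>)) (at_right 0)"
  shows "moderate \<rho> f"
proof -
  from assms(1) obtain N where "eventually (\<lambda>\<epsilon>. norm (g \<epsilon>) \<le> inverse (\<rho> \<epsilon>) ^ N) (at_right 0)"
    unfolding moderate_def by auto
  with assms(2) have "eventually (\<lambda>\<epsilon>. norm (f \<epsilon>) \<le> inverse (\<rho> \<epsilon>) ^ N) (at_right 0)"
    by eventually_elim auto
  then show ?thesis unfolding moderate_def by auto
qed

lemma ipow_mono:
  assumes "0 < r" "r \<le> 1" "N \<le> M"
  shows "inverse r ^ N \<le> inverse (r::real) ^ M"
  using assms by (intro power_increasing) (auto simp: one_le_inverse)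

lemma mod_add:
  assumes g: "rho_gauge \<rho>" and "moderate \<rho> f" "moderate \<rho> h"
  shows "moderate \<rho> (\<lambda>\<epsilon>. f \<epsilon> + h \<epsilon>)"
proof -
  from assms obtain N1 N2 where
    1: "eventually (\<lambda>\<epsilon>. norm (f \<epsilon>) \<le> inverse (\<rho> \<epsilon>) ^ N1) (at_right 0)" and
    2: "eventually (\<lambda>\<epsilon>. norm (h \<epsilon>) \<le> inverse (\<rho> \<epsilon>) ^ N2) (at_right 0)"
    unfolding moderate_def by auto
  have "eventually (\<lambda>\<epsilon>. norm (f \<epsilon> + h \<epsilon>) \<le> inverse (\<rho> \<epsilon>) ^ (Suc (max N1 N2))) (at_right 0)"
    using 1 2 ev_rho[OF g, of "1/2", simplified]
  proof eventually_elim
    case (elim \<epsilon>)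
    let ?i = "inverse (\<rho> \<epsilon>)"
    have "?i ^ N1 \<le> ?i ^ max N1 N2" "?i ^ N2 \<le> ?i ^ max N1 N2"
      using elim by (auto intro!: ipow_mono)
    moreover have "2 \<le> ?i" using elim by (simp add: field_simps)
    moreover have "0 \<le> ?i ^ max N1 N2" using elim by simp
    ultimately have "2 * ?i ^ max N1 N2 \<le> ?i ^ Suc (max N1 N2)"
      by (simp add: mult_right_mono)
    moreover have "norm (f \<epsilon> + h \<epsilon>) \<le> norm (f \<epsilon>) + norm (h \<epsilon>)" by (rule norm_triangle_ineq)
    ultimately show ?case using elim \<open>?i ^ N1 \<le> _\<close> \<open>?i ^ N2 \<le> _\<close> by linarith
  qed
  then show ?thesis unfolding moderate_def by blast
qed

lemma mod_mult:
  fixes f h :: "real \<Rightarrow> 'a::real_normed_algebra"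
  assumes "moderate \<rho> f" "moderate \<rho> h"
  shows "moderate \<rho> (\<lambda>\<epsilon>. f \<epsilon> * h \<epsilon>)"
proof -
  from assms obtain N1 N2 where
    1: "eventually (\<lambda>\<epsilon>. norm (f \<epsilon>) \<le> inverse (\<rho> \<epsilon>) ^ N1) (at_right 0)" and
    2: "eventually (\<lambda>\<epsilon>. norm (h \<epsilon>) \<le> inverse (\<rho> \<epsilon>) ^ N2) (at_right 0)"
    unfolding moderate_def by auto
  have "eventually (\<lambda>\<epsilon>. norm (f \<epsilon> * h \<epsilon>) \<le> inverse (\<rho> \<epsilon>) ^ (N1 + N2)) (at_right 0)"
    using 1 2
  proof eventually_elim
    case (elim \<epsilon>)
    have "norm (f \<epsilon> * h \<epsilon>) \<le> norm (f \<epsilon>) * norm (h \<epsilon>)" by (rule norm_mult_ineq)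
    also have "\<dots> \<le> inverse (\<rho> \<epsilon>) ^ N1 * inverse (\<rho> \<epsilon>) ^ N2"
      using elim by (intro mult_mono) (auto intro: order_trans[OF norm_ge_zero])
    finally show ?case by (simp add: power_add)
  qed
  then show ?thesis unfolding moderate_def by blast
qed

lemma mod_const:
  fixes C :: "'a::real_normed_vector"
  assumes g: "rho_gauge \<rho>"
  shows "moderate \<rho> (\<lambda>_. C)"
proof -
  have p0: "0 < norm C + 1" using norm_ge_zero[of C] by linarith
  then have p: "0 < inverse (norm C + 1)" by simp
  have "eventually (\<lambda>\<epsilon>. 0 < \<rho> \<epsilon> \<and> \<rho> \<epsilon> \<le> 1 \<and> \<rho> \<epsilon> < inverse (norm C + 1)) (at_right 0)"
    by (rule ev_rho[OF g p])
  then have "eventually (\<lambda>\<epsilon>. norm C \<le> inverse (\<rho> \<epsilon>) ^ 1) (at_right 0)"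
  proof eventually_elim
    case (elim \<epsilon>)
    then have "inverse (inverse (norm C + 1)) < inverse (\<rho> \<epsilon>)"
      by (intro less_imp_inverse_less) auto
    then have "norm C + 1 < inverse (\<rho> \<epsilon>)" by simp
    then show ?case by simp
  qed
  then show ?thesis unfolding moderate_def by blast
qed

lemma mod_ipow:
  assumes g: "rho_gauge \<rho>"
  shows "moderate \<rho> (\<lambda>\<epsilon>. inverse (\<rho> \<epsilon>) ^ R)"
proof -
  have "eventually (\<lambda>\<epsilon>. norm (inverse (\<rho> \<epsilon>) ^ R) \<le> inverse (\<rho> \<epsilon>) ^ R) (at_right 0)"
    using ev_rho[OF g, of 1, simplified] by eventually_elim (simp add: norm_power)
  then show ?thesis unfolding moderate_def by blast
qed

lemma exists_argmax_le:
  fixes f :: "nat \<Rightarrow> real"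
  shows "\<exists>j\<le>m. \<forall>n\<le>m. f n \<le> f j"
proof (induction m)
  case 0 then show ?case by auto
next
  case (Suc m)
  then obtain j where j: "j \<le> m" "\<forall>n\<le>m. f n \<le> f j" by auto
  show ?case
  proof (cases "f (Suc m) \<le> f j")
    case True then show ?thesis using j by (auto simp: le_Suc_eq)
  next
    case False then show ?thesis using j
      by (intro exI[of _ "Suc m"]) (auto simp: le_Suc_eq)
  qed
qed

lemma term_le_sums:
  fixes T :: "nat \<Rightarrow> complex"
  shows "norm (T j) \<le> norm (\<Sum>n\<le>j. T n) + norm (\<Sum>n\<le>j - 1. T n)"
proof (cases j)
  case 0 then show ?thesis by simp
next
  case (Suc k)
  have "T j = (\<Sum>n\<le>j. T n) - (\<Sum>n\<le>j - 1. T n)" using Suc by simp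
  then show ?thesis by (metis norm_triangle_ineq4)
qed

lemma pw_small:
  fixes a x :: complex and r :: real
  assumes "0 < r" "norm a \<le> inverse r ^ (n * Q + R)" "norm x \<le> r ^ Q"
  shows "norm (a * x ^ n) \<le> inverse r ^ R"
proof -
  have "norm (a * x ^ n) = norm a * norm x ^ n" by (simp add: norm_mult norm_power)
  also have "\<dots> \<le> inverse r ^ (n * Q + R) * (r ^ Q) ^ n"
    using assms by (intro mult_mono power_mono) auto
  also have "\<dots> = inverse r ^ R * ((inverse r * r) ^ Q) ^ n"
    by (simp add: power_add power_mult power_mult_distrib mult.commute mult.left_commute)
  also have "\<dots> = inverse r ^ R" using assms by simp
  finally show ?thesis .
qed

lemma one_plus_pow_le3:
  fixes n :: nat
  shows "(1 + 1 / (real n + 1)) ^ n \<le> 3"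
proof -
  have "(1 + 1 / (real n + 1)) ^ n \<le> exp (1 / (real n + 1)) ^ n"
    by (intro power_mono) (auto simp: add_pos_nonneg)
  also have "\<dots> = exp (real n * (1 / (real n + 1)))" by (rule exp_of_nat_mult[symmetric])
  also have "\<dots> \<le> exp 1" by (simp add: field_simps)
  also have "\<dots> \<le> 3" by (rule exp_le)
  finally show ?thesis .
qed

lemma pw_transfer:
  fixes a a' x y :: complex and r :: real and n :: nat
  assumes r: "0 < r" "r \<le> 1"
    and h1: "norm (a - a') \<le> r ^ (n * P)" and h2: "norm x \<le> inverse r ^ P"
    and h3: "norm a' \<le> inverse r ^ (n * Q + R)" and h4: "(real n + 2) * norm (x - y) \<le> r ^ Q"
  shows "norm (a * x ^ n) \<le> 1 + 3 * norm (a' * y ^ n) + inverse r ^ R"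
proof -
  have e1: "norm ((a - a') * x ^ n) \<le> 1"
  proof -
    have "norm ((a - a') * x ^ n) = norm (a - a') * norm x ^ n" by (simp add: norm_mult norm_power)
    also have "\<dots> \<le> r ^ (n * P) * (inverse r ^ P) ^ n"
      using h1 h2 r by (intro mult_mono power_mono) auto
    also have "\<dots> = ((r * inverse r) ^ P) ^ n"
      by (simp add: power_mult power_mult_distrib mult.commute)
    also have "\<dots> = 1" using r by simp
    finally show ?thesis .
  qed
  have e2: "norm (a' * x ^ n) \<le> 3 * norm (a' * y ^ n) + inverse r ^ R"
  proof (cases "(real n + 1) * norm (x - y) \<le> norm y")
    case True
    have "norm x \<le> norm y + norm (x - y)" by (metis norm_triangle_sub add.commute)
    also have "\<dots> \<le> norm y * (1 + 1 / (real n + 1))"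
      using True by (simp add: field_simps)
    finally have nx: "norm x \<le> norm y * (1 + 1 / (real n + 1))" .
    have "norm (a' * x ^ n) = norm a' * norm x ^ n" by (simp add: norm_mult norm_power)
    also have "\<dots> \<le> norm a' * (norm y * (1 + 1 / (real n + 1))) ^ n"
      using nx by (intro mult_left_mono power_mono) auto
    also have "\<dots> = norm a' * norm y ^ n * (1 + 1 / (real n + 1)) ^ n"
      by (simp add: power_mult_distrib)
    also have "\<dots> \<le> norm a' * norm y ^ n * 3"
      by (intro mult_left_mono one_plus_pow_le3) auto
    also have "\<dots> = 3 * norm (a' * y ^ n)" by (simp add: norm_mult norm_power)
    finally have "norm (a' * x ^ n) \<le> 3 * norm (a' * y ^ n)" .
    moreover have "0 \<le> inverse r ^ R" using r by simp
    ultimately show ?thesis by linarith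
  next
    case False
    have "norm x \<le> norm y + norm (x - y)" by (metis norm_triangle_sub add.commute)
    also have "\<dots> \<le> (real n + 2) * norm (x - y)" using False by (simp add: algebra_simps)
    also have "\<dots> \<le> r ^ Q" by (rule h4)
    finally have "norm (a' * x ^ n) \<le> inverse r ^ R" using pw_small[OF r(1) h3] by blast
    moreover have "0 \<le> norm (a' * y ^ n)" by simp
    ultimately show ?thesis by linarith
  qed
  have "norm (a * x ^ n) \<le> norm ((a - a') * x ^ n) + norm (a' * x ^ n)"
    by (metis norm_triangle_ineq diff_add_cancel distrib_right)
  then show ?thesis using e1 e2 by linarith
qed

lemma part2:
  fixes a :: "nat \<Rightarrow> real \<Rightarrow> complex" and c :: "real \<Rightarrow> complex"
  assumes g: "rho_gauge \<rho>" and wm: "coeff_wmod \<rho> a"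
  shows "\<exists>\<delta>. moderate \<rho> \<delta> \<and> glt \<rho> (\<lambda>_. 0) \<delta> \<and>
            (\<forall>z. moderate \<rho> z \<and> glt \<rho> (\<lambda>\<epsilon>. norm (z \<epsilon> - c \<epsilon>)) \<delta> \<longrightarrow>
               (\<exists>K. moderate \<rho> K \<and> glt \<rho> (\<lambda>_. 0) K \<and>
                  eventually (\<lambda>\<epsilon>. \<forall>n. norm (a n \<epsilon> * (z \<epsilon> - c \<epsilon>) ^ n) < K \<epsilon>) (at_right 0)))"
proof -
  from wm obtain Q R where QR: "eventually (\<lambda>\<epsilon>. \<forall>n. norm (a n \<epsilon>) \<le> inverse (\<rho> \<epsilon>) ^ (n * Q + R)) (at_right 0)"
    unfolding coeff_wmod_def by auto
  have ev1: "eventually (\<lambda>\<epsilon>. 0 < \<rho> \<epsilon> \<and> \<rho> \<epsilon> \<le> 1 \<and> \<rho> \<epsilon> < 1) (at_right 0)"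
    by (rule ev_rho[OF g]) simp
  define \<delta> where "\<delta> = (\<lambda>\<epsilon>. \<rho> \<epsilon> ^ (Suc Q))"
  have "moderate \<rho> \<delta>"
  proof (rule mod_mono[OF mod_const[OF g, of "1::real"]])
    show "eventually (\<lambda>\<epsilon>. norm (\<delta> \<epsilon>) \<le> norm (1::real)) (at_right 0)"
      using ev1 by eventually_elim (auto simp: \<delta>_def power_le_one simp del: power_Suc)
  qed
  moreover have "glt \<rho> (\<lambda>_. 0) \<delta>"
    unfolding glt_def
  proof (intro exI[of _ "Suc (Suc Q)"])
    show "eventually (\<lambda>\<epsilon>. \<delta> \<epsilon> - 0 > \<rho> \<epsilon> ^ Suc (Suc Q)) (at_right 0)"
      using ev1 by eventually_elim (auto simp: \<delta>_def)
  qed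
  moreover have "\<exists>K. moderate \<rho> K \<and> glt \<rho> (\<lambda>_. 0) K \<and>
                  eventually (\<lambda>\<epsilon>. \<forall>n. norm (a n \<epsilon> * (z \<epsilon> - c \<epsilon>) ^ n) < K \<epsilon>) (at_right 0)"
    if z: "moderate \<rho> z" "glt \<rho> (\<lambda>\<epsilon>. norm (z \<epsilon> - c \<epsilon>)) \<delta>" for z
  proof -
    from z(2) obtain m where m: "eventually (\<lambda>\<epsilon>. \<delta> \<epsilon> - norm (z \<epsilon> - c \<epsilon>) > \<rho> \<epsilon> ^ m) (at_right 0)"
      unfolding glt_def by auto
    define K where "K = (\<lambda>\<epsilon>. inverse (\<rho> \<epsilon>) ^ R + 1)"
    have "moderate \<rho> K" unfolding K_def by (intro mod_add[OF g] mod_ipow[OF g] mod_const[OF g])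
    moreover have "glt \<rho> (\<lambda>_. 0) K" unfolding glt_def
    proof (intro exI[of _ 0])
      show "eventually (\<lambda>\<epsilon>. K \<epsilon> - 0 > \<rho> \<epsilon> ^ 0) (at_right 0)"
        using ev1 by eventually_elim (auto simp: K_def)
    qed
    moreover have "eventually (\<lambda>\<epsilon>. \<forall>n. norm (a n \<epsilon> * (z \<epsilon> - c \<epsilon>) ^ n) < K \<epsilon>) (at_right 0)"
      using ev1 m QR
    proof eventually_elim
      case (elim \<epsilon>)
      have "\<rho> \<epsilon> ^ m > 0" using elim by simp
      then have "norm (z \<epsilon> - c \<epsilon>) \<le> \<rho> \<epsilon> ^ Suc Q" using elim(2) unfolding \<delta>_def by linarith
      also have "\<dots> \<le> \<rho> \<epsilon> ^ Q" using elim by (intro power_decreasing) auto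
      finally have nz: "norm (z \<epsilon> - c \<epsilon>) \<le> \<rho> \<epsilon> ^ Q" .
      show ?case
      proof
        fix n
        have "norm (a n \<epsilon> * (z \<epsilon> - c \<epsilon>) ^ n) \<le> inverse (\<rho> \<epsilon>) ^ R"
          using elim nz by (intro pw_small) auto
        then show "norm (a n \<epsilon> * (z \<epsilon> - c \<epsilon>) ^ n) < K \<epsilon>" by (simp add: K_def)
      qed
    qed
    ultimately show ?thesis by blast
  qed
  ultimately show ?thesis by blast
qed

lemma mod_norm: "moderate \<rho> f \<Longrightarrow> moderate \<rho> (\<lambda>\<epsilon>. norm (f \<epsilon>))"
  by (erule mod_mono) simp

lemma mod_uminus: "moderate \<rho> f \<Longrightarrow> moderate \<rho> (\<lambda>\<epsilon>. - f \<epsilon>)"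
  by (erule mod_mono) simp

lemma hypnat_mono: "hypnat \<rho> N \<Longrightarrow> (\<And>\<epsilon>. N' \<epsilon> \<le> N \<epsilon>) \<Longrightarrow> hypnat \<rho> N'"
  unfolding hypnat_def by (erule mod_mono) simp

lemma hypnat_add: "rho_gauge \<rho> \<Longrightarrow> hypnat \<rho> N1 \<Longrightarrow> hypnat \<rho> N2 \<Longrightarrow> hypnat \<rho> (\<lambda>\<epsilon>. N1 \<epsilon> + N2 \<epsilon>)"
  unfolding hypnat_def by (simp add: mod_add)

lemma hypnat_const: "rho_gauge \<rho> \<Longrightarrow> hypnat \<rho> (\<lambda>_. k)"
  unfolding hypnat_def by (rule mod_const)

lemma gle_pw:
  assumes g: "rho_gauge \<rho>" and "\<And>\<epsilon>. f \<epsilon> \<le> h \<epsilon>"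
  shows "gle \<rho> f h"
proof -
  have "negligible \<rho> (\<lambda>_. 0::real)" unfolding negligible_def
  proof
    fix q :: nat
    show "eventually (\<lambda>\<epsilon>. norm ((\<lambda>_. 0::real) \<epsilon>) \<le> \<rho> \<epsilon> ^ q) (at_right 0)"
      using ev_rho[OF g, of 1] by (auto elim: eventually_mono)
  qed
  then show ?thesis unfolding gle_def using assms(2)
    by (intro exI[of _ "\<lambda>_. 0"]) auto
qed

lemma term_le_tails:
  fixes T :: "nat \<Rightarrow> complex"
  assumes "j \<ge> 1"
  shows "norm (T j) \<le> norm ((\<Sum>n\<le>j. T n) - l) + norm ((\<Sum>n\<le>j - 1. T n) - l)"
proof -
  obtain k where k: "j = Suc k" using assms by (cases j) auto
  have "T j = ((\<Sum>n\<le>j. T n) - l) - ((\<Sum>n\<le>j - 1. T n) - l)" using k by simp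
  then show ?thesis by (metis norm_triangle_ineq4)
qed

lemma arith1:
  fixes r e :: real and n :: nat
  assumes "0 < r" "r \<le> 1/3" "real n \<le> inverse r ^ M" "0 \<le> e" "e \<le> 2 * r ^ (Q + M + 2)"
  shows "(real n + 2) * e \<le> r ^ Q"
proof -
  have i1: "1 \<le> inverse r ^ M" using assms by (intro one_le_power) (simp add: one_le_inverse)
  have "(real n + 2) * e \<le> (3 * inverse r ^ M) * (2 * r ^ (Q + M + 2))"
    using assms i1 by (intro mult_mono) auto
  also have "\<dots> = 6 * r ^ 2 * r ^ Q * (inverse r * r) ^ M"
    by (simp add: power_add power_mult_distrib algebra_simps power2_eq_square)
  also have "\<dots> = 6 * r ^ 2 * r ^ Q" using assms by simp
  also have "\<dots> \<le> 1 * r ^ Q"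
  proof (intro mult_right_mono)
    have "r ^ 2 \<le> (1/3) ^ 2" using assms by (intro power_mono) auto
    then show "6 * r ^ 2 \<le> 1" by (simp add: power_divide)
  qed (use assms in simp)
  finally show ?thesis by simp
qed

lemma part1:
  fixes a :: "nat \<Rightarrow> real \<Rightarrow> complex" and c z :: "real \<Rightarrow> complex"
  assumes g: "rho_gauge \<rho>" and mc: "moderate \<rho> c" and cs: "conv_set \<rho> a c z"
  shows "\<exists>K. hypnat \<rho> K \<and>
               (\<forall>N. hypnat \<rho> N \<longrightarrow>
                  glt \<rho> (\<lambda>\<epsilon>. norm (a (N \<epsilon>) \<epsilon> * (z \<epsilon> - c \<epsilon>) ^ (N \<epsilon>))) (\<lambda>\<epsilon>. real (K \<epsilon>)))"
proof -
  from cs obtain z' c' a' where mz: "moderate \<rho> z" and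
    zz: "Ceq \<rho> z z'" and cc: "Ceq \<rho> c c'" and wm: "coeff_wmod \<rho> a'" and aa: "coeff_eq \<rho> a a'" and
    hm: "hypsum_moderate \<rho> (\<lambda>n \<epsilon>. a' n \<epsilon> * (z' \<epsilon> - c' \<epsilon>) ^ n)" and
    hl: "hyperlim \<rho> (\<lambda>N \<epsilon>. \<Sum>n\<le>N \<epsilon>. a' n \<epsilon> * (z' \<epsilon> - c' \<epsilon>) ^ n)
                   (\<lambda>\<epsilon>. \<Sum>n. a' n \<epsilon> * (z' \<epsilon> - c' \<epsilon>) ^ n)"
    unfolding conv_set_def by blast
  define T where "T = (\<lambda>n \<epsilon>. a' n \<epsilon> * (z' \<epsilon> - c' \<epsilon>) ^ n)"
  define L where "L = (\<lambda>\<epsilon>. \<Sum>n. a' n \<epsilon> * (z' \<epsilon> - c' \<epsilon>) ^ n)"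
  have hm': "\<And>N. hypnat \<rho> N \<Longrightarrow> moderate \<rho> (\<lambda>\<epsilon>. \<Sum>n\<le>N \<epsilon>. T n \<epsilon>)"
    using hm unfolding hypsum_moderate_def T_def by blast
  from hl obtain M where hM: "hypnat \<rho> M" and
    lim: "\<And>n. hypnat \<rho> n \<Longrightarrow> gle \<rho> (\<lambda>\<epsilon>. real (M \<epsilon>)) (\<lambda>\<epsilon>. real (n \<epsilon>)) \<Longrightarrow>
             glt \<rho> (\<lambda>\<epsilon>. norm ((\<Sum>k\<le>n \<epsilon>. T k \<epsilon>) - L \<epsilon>)) (\<lambda>\<epsilon>. \<rho> \<epsilon> ^ 0)"
    unfolding hyperlim_def T_def L_def by blast
  have ev3: "eventually (\<lambda>\<epsilon>. 0 < \<rho> \<epsilon> \<and> \<rho> \<epsilon> \<le> 1 \<and> \<rho> \<epsilon> < 1/3) (at_right 0)"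
    by (rule ev_rho[OF g]) simp
  define J where "J = (\<lambda>\<epsilon>. SOME j. j \<le> M \<epsilon> \<and> (\<forall>n\<le>M \<epsilon>. norm (T n \<epsilon>) \<le> norm (T j \<epsilon>)))"
  have J: "J \<epsilon> \<le> M \<epsilon> \<and> (\<forall>n\<le>M \<epsilon>. norm (T n \<epsilon>) \<le> norm (T (J \<epsilon>) \<epsilon>))" for \<epsilon>
    unfolding J_def by (rule someI_ex) (rule exists_argmax_le)
  have hJ: "hypnat \<rho> J" using hM by (rule hypnat_mono) (use J in blast)
  have hJm: "hypnat \<rho> (\<lambda>\<epsilon>. J \<epsilon> - 1)" using hJ by (rule hypnat_mono) simp
  define B where "B = (\<lambda>\<epsilon>. norm (T (J \<epsilon>) \<epsilon>) + 2)"
  have mB: "moderate \<rho> B"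
  proof (rule mod_mono)
    show "moderate \<rho> (\<lambda>\<epsilon>. (norm (\<Sum>n\<le>J \<epsilon>. T n \<epsilon>) + norm (\<Sum>n\<le>J \<epsilon> - 1. T n \<epsilon>)) + 2)"
      by (intro mod_add[OF g] mod_norm hm' hJ hJm mod_const[OF g])
    show "eventually (\<lambda>\<epsilon>. norm (B \<epsilon>) \<le> norm ((norm (\<Sum>n\<le>J \<epsilon>. T n \<epsilon>) + norm (\<Sum>n\<le>J \<epsilon> - 1. T n \<epsilon>)) + 2)) (at_right 0)"
    proof (intro always_eventually allI)
      fix \<epsilon>
      have "norm (T (J \<epsilon>) \<epsilon>) \<le> norm (\<Sum>n\<le>J \<epsilon>. T n \<epsilon>) + norm (\<Sum>n\<le>J \<epsilon> - 1. T n \<epsilon>)"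
        by (rule term_le_sums)
      moreover have "0 \<le> norm (\<Sum>n\<le>J \<epsilon>. T n \<epsilon>) + norm (\<Sum>n\<le>J \<epsilon> - 1. T n \<epsilon>)" by simp
      ultimately show "norm (B \<epsilon>) \<le> norm ((norm (\<Sum>n\<le>J \<epsilon>. T n \<epsilon>) + norm (\<Sum>n\<le>J \<epsilon> - 1. T n \<epsilon>)) + 2)"
        unfolding B_def by simp
    qed
  qed
  have claim2: "eventually (\<lambda>\<epsilon>. norm (T (N \<epsilon>) \<epsilon>) \<le> B \<epsilon>) (at_right 0)" if hN: "hypnat \<rho> N" for N
  proof -
    define N1 where "N1 = (\<lambda>\<epsilon>. max (N \<epsilon>) (Suc (M \<epsilon>)))"
    define N2 where "N2 = (\<lambda>\<epsilon>. N1 \<epsilon> - 1)"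
    have hN1: "hypnat \<rho> N1"
      by (rule hypnat_mono[OF hypnat_add[OF g hN hypnat_add[OF g hM hypnat_const[OF g, of 1]]]]) (auto simp: N1_def)
    have hN2: "hypnat \<rho> N2" using hN1 by (rule hypnat_mono) (simp add: N2_def)
    have "glt \<rho> (\<lambda>\<epsilon>. norm ((\<Sum>k\<le>N1 \<epsilon>. T k \<epsilon>) - L \<epsilon>)) (\<lambda>\<epsilon>. \<rho> \<epsilon> ^ 0)"
      by (rule lim[OF hN1 gle_pw[OF g]]) (simp add: N1_def)
    then obtain m1 where m1: "eventually (\<lambda>\<epsilon>. \<rho> \<epsilon> ^ 0 - norm ((\<Sum>k\<le>N1 \<epsilon>. T k \<epsilon>) - L \<epsilon>) > \<rho> \<epsilon> ^ m1) (at_right 0)"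
      unfolding glt_def by blast
    have "glt \<rho> (\<lambda>\<epsilon>. norm ((\<Sum>k\<le>N2 \<epsilon>. T k \<epsilon>) - L \<epsilon>)) (\<lambda>\<epsilon>. \<rho> \<epsilon> ^ 0)"
      by (rule lim[OF hN2 gle_pw[OF g]]) (simp add: N2_def N1_def)
    then obtain m2 where m2: "eventually (\<lambda>\<epsilon>. \<rho> \<epsilon> ^ 0 - norm ((\<Sum>k\<le>N2 \<epsilon>. T k \<epsilon>) - L \<epsilon>) > \<rho> \<epsilon> ^ m2) (at_right 0)"
      unfolding glt_def by blast
    show ?thesis using m1 m2 ev3
    proof eventually_elim
      case (elim \<epsilon>)
      show ?case
      proof (cases "N \<epsilon> \<le> M \<epsilon>")
        case True
        then show ?thesis using J[of \<epsilon>] unfolding B_def by force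
      next
        case False
        then have e: "N1 \<epsilon> = N \<epsilon>" by (simp add: N1_def)
        have p1: "\<rho> \<epsilon> ^ m1 > 0" "\<rho> \<epsilon> ^ m2 > 0" using elim by auto
        have "norm (T (N1 \<epsilon>) \<epsilon>) \<le> norm ((\<Sum>k\<le>N1 \<epsilon>. T k \<epsilon>) - L \<epsilon>) + norm ((\<Sum>k\<le>N1 \<epsilon> - 1. T k \<epsilon>) - L \<epsilon>)"
          by (rule term_le_tails) (simp add: N1_def)
        then have "norm (T (N1 \<epsilon>) \<epsilon>) < 2" using elim(1,2) p1 by (simp add: N2_def)
        then have "norm (T (N \<epsilon>) \<epsilon>) < 2" using e by simp
        then show ?thesis using norm_ge_zero[of "T (J \<epsilon>) \<epsilon>"] unfolding B_def by linarith
      qed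
    qed
  qed
  have "moderate \<rho> (\<lambda>\<epsilon>. z \<epsilon> + - c \<epsilon>)" by (intro mod_add[OF g] mz mod_uminus mc)
  then obtain P where P: "eventually (\<lambda>\<epsilon>. norm (z \<epsilon> - c \<epsilon>) \<le> inverse (\<rho> \<epsilon>) ^ P) (at_right 0)"
    unfolding moderate_def by auto
  from wm obtain Q R where QR: "eventually (\<lambda>\<epsilon>. \<forall>n. norm (a' n \<epsilon>) \<le> inverse (\<rho> \<epsilon>) ^ (n * Q + R)) (at_right 0)"
    unfolding coeff_wmod_def by auto
  from aa have AA: "eventually (\<lambda>\<epsilon>. \<forall>n. norm (a n \<epsilon> - a' n \<epsilon>) \<le> \<rho> \<epsilon> ^ (n * P + 0)) (at_right 0)"
    unfolding coeff_eq_def by blast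
  have claim3: "eventually (\<lambda>\<epsilon>. norm (a (N \<epsilon>) \<epsilon> * (z \<epsilon> - c \<epsilon>) ^ (N \<epsilon>)) \<le>
      1 + 3 * norm (T (N \<epsilon>) \<epsilon>) + inverse (\<rho> \<epsilon>) ^ R) (at_right 0)" if hN: "hypnat \<rho> N" for N
  proof -
    from hN obtain M' where M': "eventually (\<lambda>\<epsilon>. norm (real (N \<epsilon>)) \<le> inverse (\<rho> \<epsilon>) ^ M') (at_right 0)"
      unfolding hypnat_def moderate_def by auto
    from zz have Z: "eventually (\<lambda>\<epsilon>. norm (z \<epsilon> - z' \<epsilon>) \<le> \<rho> \<epsilon> ^ (Q + M' + 2)) (at_right 0)"
      unfolding Ceq_def negligible_def by blast
    from cc have C: "eventually (\<lambda>\<epsilon>. norm (c \<epsilon> - c' \<epsilon>) \<le> \<rho> \<epsilon> ^ (Q + M' + 2)) (at_right 0)"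
      unfolding Ceq_def negligible_def by blast
    show ?thesis using ev3 P QR AA M' Z C
    proof eventually_elim
      case (elim \<epsilon>)
      let ?x = "z \<epsilon> - c \<epsilon>" and ?y = "z' \<epsilon> - c' \<epsilon>"
      have "?x - ?y = (z \<epsilon> - z' \<epsilon>) - (c \<epsilon> - c' \<epsilon>)" by simp
      then have "norm (?x - ?y) \<le> norm (z \<epsilon> - z' \<epsilon>) + norm (c \<epsilon> - c' \<epsilon>)"
        by (metis norm_triangle_ineq4)
      then have e: "norm (?x - ?y) \<le> 2 * \<rho> \<epsilon> ^ (Q + M' + 2)" using elim(6,7) by linarith
      have h4: "(real (N \<epsilon>) + 2) * norm (?x - ?y) \<le> \<rho> \<epsilon> ^ Q"
        using elim(1,5) e by (intro arith1[of _ _ M']) auto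
      have "norm (a (N \<epsilon>) \<epsilon> * ?x ^ (N \<epsilon>)) \<le> 1 + 3 * norm (a' (N \<epsilon>) \<epsilon> * ?y ^ (N \<epsilon>)) + inverse (\<rho> \<epsilon>) ^ R"
        using elim(1,2) elim(3)[rule_format, of "N \<epsilon>"] elim(4)[rule_format, of "N \<epsilon>"] h4
        by (intro pw_transfer[of _ _ _ _ P _ Q]) auto
      then show ?case by (simp add: T_def)
    qed
  qed
  define K where "K = (\<lambda>\<epsilon>. nat \<lceil>1 + 3 * B \<epsilon> + inverse (\<rho> \<epsilon>) ^ R\<rceil> + 2)"
  have "hypnat \<rho> K" unfolding hypnat_def
  proof (rule mod_mono)
    show "moderate \<rho> (\<lambda>\<epsilon>. ((1 + 3 * B \<epsilon>) + inverse (\<rho> \<epsilon>) ^ R) + 3)"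
      by (intro mod_add[OF g] mod_mult mB mod_ipow[OF g] mod_const[OF g])
    show "eventually (\<lambda>\<epsilon>. norm (real (K \<epsilon>)) \<le> norm (((1 + 3 * B \<epsilon>) + inverse (\<rho> \<epsilon>) ^ R) + 3)) (at_right 0)"
      using ev3
    proof eventually_elim
      case (elim \<epsilon>)
      have b: "0 \<le> B \<epsilon>" unfolding B_def by simp
      have i: "0 \<le> inverse (\<rho> \<epsilon>) ^ R" using elim by simp
      have "real (K \<epsilon>) \<le> (1 + 3 * B \<epsilon> + inverse (\<rho> \<epsilon>) ^ R) + 1 + 2"
        unfolding K_def using b i by linarith
      then show ?case using b i by simp
    qed
  qed
  moreover have "glt \<rho> (\<lambda>\<epsilon>. norm (a (N \<epsilon>) \<epsilon> * (z \<epsilon> - c \<epsilon>) ^ (N \<epsilon>))) (\<lambda>\<epsilon>. real (K \<epsilon>))"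
    if hN: "hypnat \<rho> N" for N
    unfolding glt_def
  proof (intro exI[of _ 0])
    show "eventually (\<lambda>\<epsilon>. real (K \<epsilon>) - norm (a (N \<epsilon>) \<epsilon> * (z \<epsilon> - c \<epsilon>) ^ (N \<epsilon>)) > \<rho> \<epsilon> ^ 0) (at_right 0)"
      using claim2[OF hN] claim3[OF hN]
    proof eventually_elim
      case (elim \<epsilon>)
      have "1 + 3 * B \<epsilon> + inverse (\<rho> \<epsilon>) ^ R \<le> real (nat \<lceil>1 + 3 * B \<epsilon> + inverse (\<rho> \<epsilon>) ^ R\<rceil>)"
        by linarith
      then show ?case using elim unfolding K_def by simp
    qed
  qed
  ultimately show ?thesis by blast
qed

theorem lemma2p32:
  fixes \<rho> :: "real \<Rightarrow> real" and a :: "nat \<Rightarrow> real \<Rightarrow> complex" and c :: "real \<Rightarrow> complex"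
  assumes "rho_gauge \<rho>" and "coeff_wmod \<rho> a" and "moderate \<rho> c"
  shows "(\<forall>z. conv_set \<rho> a c z \<longrightarrow>
            (\<exists>K. hypnat \<rho> K \<and>
               (\<forall>N. hypnat \<rho> N \<longrightarrow>
                  glt \<rho> (\<lambda>\<epsilon>. norm (a (N \<epsilon>) \<epsilon> * (z \<epsilon> - c \<epsilon>) ^ (N \<epsilon>))) (\<lambda>\<epsilon>. real (K \<epsilon>)))))
       \<and> (\<exists>\<delta>. moderate \<rho> \<delta> \<and> glt \<rho> (\<lambda>_. 0) \<delta> \<and>
            (\<forall>z. moderate \<rho> z \<and> glt \<rho> (\<lambda>\<epsilon>. norm (z \<epsilon> - c \<epsilon>)) \<delta> \<longrightarrow>
               (\<exists>K. moderate \<rho> K \<and> glt \<rho> (\<lambda>_. 0) K \<and>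
                  eventually (\<lambda>\<epsilon>. \<forall>n. norm (a n \<epsilon> * (z \<epsilon> - c \<epsilon>) ^ n) < K \<epsilon>) (at_right 0))))"
  using part1[OF assms(1) assms(3)] part2[OF assms(1) assms(2)] by blast

end
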